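(* Let \(f\colon\mathbb{R}^n\to\mathbb{R}\) be a real valued function and \(P\colon\mathbb{R}^n\to\mathbb{R}^n\) a vector field. For arbitrary sequences of real numbers \(\{a_k\}_{k\ge0},\{b_k^-\}_{k\ge0},\{b_k^+\}_{k\ge0}\) consider the time-dependent discrete Lagrangians and discrete forces \[L^k_d(z_0,z_1)=a_k\tfrac12\|z_1-z_0\|^2-b_k^-f(z_0)-b_{k+1}^+f(z_1),\] \[(F^k_d)^-(z_0,z_1)=-\tfrac{a_{k-1}}{a_k}(b_k^-+b_k^+)P(z_0),\qquad (F^k_d)^+(z_0,z_1)=(b_k^-+b_k^+)P(z_0).\] (1) If \(f\) is differentiable with \(P=\nabla f\) and \(a_k\neq0\) for all \(k\), then the free discrete Euler–Lagrange equations of \(L^k_d\) and the forced discrete Euler–Lagrange equations of \((L^k_d,(F^k_d)^-,(F^k_d)^+)\) are respectively equivalent to the recursive schemes \[y_{k+1}=x_k-\eta_kP(x_k),\quad x_{k+1}=y_{k+1}+\mu_k(x_k-x_{k-1})\] and \[\bar y_{k+1}=\bar x_k-\eta_kP(\bar x_k),\quad \bar x_{k+1}=\bar y_{k+1}+\mu_k(\bar y_{k+1}-\bar y_k),\] where \(\mu_{k+1}=a_k/a_{k+1}\) and \(\eta_k=(b_k^-+b_k^+)/a_k\) for \(k\ge0\). (2) Conversely, given a vector field \(P\) and arbitrary real sequences \(\{\mu_{k+1}\}_{k\ge0}\), \(\{\eta_k\}_{k\ge0}\), consider the sequences defined by the two schemes above. If \(P\) is conservative, \(P=\nabla f\), and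 \(\mu_{k+1}\neq0\) for all \(k\), then both schemes are variational: they are equivalent, respectively, to the free and forced discrete Euler–Lagrange equations of the discrete Lagrangians and forces above, with \(f\) the potential of \(P\) and with \(a_0=1\), \(a_{k+1}=a_k/\mu_{k+1}\) and \(b_k^\pm=\tfrac12a_k\eta_k\) for all \(k\ge0\).
   Context: For a family of discrete Lagrangians \(L^k_d\colon\mathbb{R}^n\times\mathbb{R}^n\to\mathbb{R}\) and discrete forces \((F^k_d)^\pm\), a sequence \((x_k)\) satisfies the forced discrete Euler–Lagrange equations if \(D_1L^k_d(x_k,x_{k+1})+D_2L^{k-1}_d(x_{k-1},x_k)+(F^k_d)^-(x_k,x_{k+1})+(F^{k-1}_d)^+(x_{k-1},x_k)=0\) for all interior indices \(k\ge1\); the free discrete Euler–Lagrange equations are the same with the force terms omitted, \(D_1L^k_d(x_k,x_{k+1})+D_2L^{k-1}_d(x_{k-1},x_k)=0\). Here \(D_1,D_2\) are partial derivatives (gradients) with respect to the first and second arguments. These equations are the stationarity conditions of the discrete (Lagrange–d'Alembert) variational principle \(\delta\sum_k L^k_d(x_k,x_{k+1})+\sum_k[(F^k_d)^-(x_k,x_{k+1})\delta x_k+(F^k_d)^+(x_k,x_{k+1})\delta x_{k+1}]=0\) for variations with fixed endpoints. *)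

theory Defs
  imports "HOL-Analysis.Analysis"
begin

definition grad :: "('v::real_inner \<Rightarrow> real) \<Rightarrow> 'v \<Rightarrow> 'v" where
  "grad g x = (THE v. (g has_derivative (\<lambda>h. v \<bullet> h)) (at x))"

definition D1 :: "('v::real_inner \<Rightarrow> 'v \<Rightarrow> real) \<Rightarrow> 'v \<Rightarrow> 'v \<Rightarrow> 'v" where
  "D1 L z0 z1 = grad (\<lambda>z. L z z1) z0"

definition D2 :: "('v::real_inner \<Rightarrow> 'v \<Rightarrow> real) \<Rightarrow> 'v \<Rightarrow> 'v \<Rightarrow> 'v" where
  "D2 L z0 z1 = grad (\<lambda>z. L z0 z) z1"

definition free_DEL :: "(nat \<Rightarrow> 'v::real_inner \<Rightarrow> 'v \<Rightarrow> real) \<Rightarrow> (nat \<Rightarrow> 'v) \<Rightarrow> bool" where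
  "free_DEL L x \<longleftrightarrow>
     (\<forall>k\<ge>1. D1 (L k) (x k) (x (k+1)) + D2 (L (k-1)) (x (k-1)) (x k) = 0)"

definition forced_DEL ::
  "(nat \<Rightarrow> 'v::real_inner \<Rightarrow> 'v \<Rightarrow> real) \<Rightarrow> (nat \<Rightarrow> 'v \<Rightarrow> 'v \<Rightarrow> 'v) \<Rightarrow> (nat \<Rightarrow> 'v \<Rightarrow> 'v \<Rightarrow> 'v)
    \<Rightarrow> (nat \<Rightarrow> 'v) \<Rightarrow> bool" where
  "forced_DEL L Fm Fp x \<longleftrightarrow>
     (\<forall>k\<ge>1. D1 (L k) (x k) (x (k+1)) + D2 (L (k-1)) (x (k-1)) (x k)
            + Fm k (x k) (x (k+1)) + Fp (k-1) (x (k-1)) (x k) = 0)"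

definition Ld :: "(nat \<Rightarrow> real) \<Rightarrow> (nat \<Rightarrow> real) \<Rightarrow> (nat \<Rightarrow> real) \<Rightarrow> ('v::real_inner \<Rightarrow> real)
    \<Rightarrow> nat \<Rightarrow> 'v \<Rightarrow> 'v \<Rightarrow> real" where
  "Ld a bm bp f k z0 z1 = a k * (1/2) * (norm (z1 - z0))^2 - bm k * f z0 - bp (k+1) * f z1"

text \<open>(F^k_d)^-(z0,z1) = -(a_{k-1}/a_k)(b^-_k+b^+_k) P(z0)  (only used for k >= 1).\<close>
definition Fdm :: "(nat \<Rightarrow> real) \<Rightarrow> (nat \<Rightarrow> real) \<Rightarrow> (nat \<Rightarrow> real) \<Rightarrow> ('v::real_inner \<Rightarrow> 'v)
    \<Rightarrow> nat \<Rightarrow> 'v \<Rightarrow> 'v \<Rightarrow> 'v" where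
  "Fdm a bm bp P k z0 z1 = (- (a (k-1) / a k) * (bm k + bp k)) *\<^sub>R P z0"

definition Fdp :: "(nat \<Rightarrow> real) \<Rightarrow> (nat \<Rightarrow> real) \<Rightarrow> (nat \<Rightarrow> real) \<Rightarrow> ('v::real_inner \<Rightarrow> 'v)
    \<Rightarrow> nat \<Rightarrow> 'v \<Rightarrow> 'v \<Rightarrow> 'v" where
  "Fdp a bm bp P k z0 z1 = (bm k + bp k) *\<^sub>R P z0"

definition scheme_free :: "(nat \<Rightarrow> real) \<Rightarrow> (nat \<Rightarrow> real) \<Rightarrow> ('v::real_vector \<Rightarrow> 'v)
    \<Rightarrow> (nat \<Rightarrow> 'v) \<Rightarrow> (nat \<Rightarrow> 'v) \<Rightarrow> bool" where
  "scheme_free mu eta P x y \<longleftrightarrow>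
     (\<forall>k. y (k+1) = x k - eta k *\<^sub>R P (x k)) \<and>
     (\<forall>k\<ge>1. x (k+1) = y (k+1) + mu k *\<^sub>R (x k - x (k-1)))"

definition scheme_forced :: "(nat \<Rightarrow> real) \<Rightarrow> (nat \<Rightarrow> real) \<Rightarrow> ('v::real_vector \<Rightarrow> 'v)
    \<Rightarrow> (nat \<Rightarrow> 'v) \<Rightarrow> (nat \<Rightarrow> 'v) \<Rightarrow> bool" where
  "scheme_forced mu eta P x y \<longleftrightarrow>
     (\<forall>k. y (k+1) = x k - eta k *\<^sub>R P (x k)) \<and>
     (\<forall>k\<ge>1. x (k+1) = y (k+1) + mu k *\<^sub>R (y (k+1) - y k))"

end

theory Submission imports Defs begin

lemma grad_eq:
  assumes "(g has_derivative (\<lambda>h. v \<bullet> h)) (at x)"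
  shows "grad g x = v"
  unfolding grad_def
proof (rule the_equality)
  fix w assume "(g has_derivative (\<lambda>h. w \<bullet> h)) (at x)"
  with assms have "(\<lambda>h. w \<bullet> h) = (\<lambda>h. v \<bullet> h)" using has_derivative_unique by blast
  then have "w \<bullet> (w - v) = v \<bullet> (w - v)" by metis
  then have "(w - v) \<bullet> (w - v) = 0" by (simp add: inner_diff_left)
  then show "w = v" by simp
qed (rule assms)

lemma D1_Ld:
  fixes f :: "'v::real_inner \<Rightarrow> real"
  assumes grad_f: "\<forall>z. (f has_derivative (\<lambda>h. P z \<bullet> h)) (at z)"
  shows "D1 (Ld a bm bp f k) z0 z1 = a k *\<^sub>R (z0 - z1) - bm k *\<^sub>R P z0"
  unfolding D1_def
proof (rule grad_eq)
  have "((\<lambda>z. a k * (1/2) * ((z1 - z) \<bullet> (z1 - z)) - bm k * f z - bp (k+1) * f z1) has_derivative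
     (\<lambda>h. a k * (1/2) * ((0 - h) \<bullet> (z1 - z0) + (z1 - z0) \<bullet> (0 - h)) - bm k * (P z0 \<bullet> h) - 0)) (at z0)"
    using grad_f by (auto intro!: derivative_eq_intros)
  then show "((\<lambda>z. Ld a bm bp f k z z1) has_derivative (\<lambda>h. (a k *\<^sub>R (z0 - z1) - bm k *\<^sub>R P z0) \<bullet> h)) (at z0)"
    unfolding Ld_def power2_norm_eq_inner
    by (rule has_derivative_eq_rhs) (auto simp: algebra_simps inner_commute fun_eq_iff)
qed

lemma D2_Ld:
  fixes f :: "'v::real_inner \<Rightarrow> real"
  assumes grad_f: "\<forall>z. (f has_derivative (\<lambda>h. P z \<bullet> h)) (at z)"
  shows "D2 (Ld a bm bp f k) z0 z1 = a k *\<^sub>R (z1 - z0) - bp (k+1) *\<^sub>R P z1"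
  unfolding D2_def
proof (rule grad_eq)
  have "((\<lambda>z. a k * (1/2) * ((z - z0) \<bullet> (z - z0)) - bm k * f z0 - bp (k+1) * f z) has_derivative
     (\<lambda>h. a k * (1/2) * ((h - 0) \<bullet> (z1 - z0) + (z1 - z0) \<bullet> (h - 0)) - 0 - bp (k+1) * (P z1 \<bullet> h))) (at z1)"
    using grad_f by (auto intro!: derivative_eq_intros)
  then show "((\<lambda>z. Ld a bm bp f k z0 z) has_derivative (\<lambda>h. (a k *\<^sub>R (z1 - z0) - bp (k+1) *\<^sub>R P z1) \<bullet> h)) (at z1)"
    unfolding Ld_def power2_norm_eq_inner
    by (rule has_derivative_eq_rhs) (auto simp: algebra_simps inner_commute fun_eq_iff)
qed
lemma all_ge1: "(\<forall>k\<ge>(1::nat). Q k) = (\<forall>j. Q (Suc j))"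
proof
  assume "\<forall>k\<ge>1. Q k" then show "\<forall>j. Q (Suc j)" by simp
next
  assume h: "\<forall>j. Q (Suc j)"
  show "\<forall>k\<ge>1. Q k"
  proof (intro allI impI)
    fix k :: nat assume "k \<ge> 1" then obtain j where "k = Suc j" by (cases k) auto
    with h show "Q k" by simp
  qed
qed

lemma sc0: "c \<noteq> 0 \<Longrightarrow> (c *\<^sub>R (A - B) = 0) = (B = (A::'v::real_vector))"
  by auto

lemma alg2: "c *\<^sub>R (X1 - e1 *\<^sub>R P1 + m *\<^sub>R (X1 - X0) - X2) + (-m * (e1*c)) *\<^sub>R P1 + (e0*(m*c)) *\<^sub>R P0
  = c *\<^sub>R (X1 - e1 *\<^sub>R P1 + m *\<^sub>R ((X1 - e1 *\<^sub>R P1) - (X0 - e0 *\<^sub>R P0)) - (X2::'v::real_vector))"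
  by (simp add: algebra_simps)

lemma part1:
  fixes f :: "'v::real_inner \<Rightarrow> real"
  assumes grad_f: "\<forall>z. (f has_derivative (\<lambda>h. P z \<bullet> h)) (at z)"
    and ha: "\<forall>k. a k \<noteq> 0" and hmu: "\<forall>k. mu (k+1) = a k / a (k+1)"
    and heta: "\<forall>k. eta k = (bm k + bp k) / a k"
  shows "(\<forall>x. free_DEL (Ld a bm bp f) x \<longleftrightarrow> (\<exists>y. scheme_free mu eta P x y))
     \<and> (\<forall>x. forced_DEL (Ld a bm bp f) (Fdm a bm bp P) (Fdp a bm bp P) x
                 \<longleftrightarrow> (\<exists>y. scheme_forced mu eta P x y))"
proof -
  have am: "a j = mu (Suc j) * a (Suc j)" for j using hmu ha by (simp add: field_simps)
  have be: "bm j + bp j = eta j * a j" for j using heta ha by (simp add: field_simps)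
  have E1: "D1 (Ld a bm bp f (Suc j)) (x (Suc j)) (x (Suc j+1)) + D2 (Ld a bm bp f j) (x j) (x (Suc j))
     = a (Suc j) *\<^sub>R (x (Suc j) - eta (Suc j) *\<^sub>R P (x (Suc j)) + mu (Suc j) *\<^sub>R (x (Suc j) - x j) - x (Suc (Suc j)))" for x j
  proof -
    have "D1 (Ld a bm bp f (Suc j)) (x (Suc j)) (x (Suc j+1)) + D2 (Ld a bm bp f j) (x j) (x (Suc j))
      = a (Suc j) *\<^sub>R (x (Suc j) - x (Suc (Suc j))) + a j *\<^sub>R (x (Suc j) - x j) - (bm (Suc j) + bp (Suc j)) *\<^sub>R P (x (Suc j))"
      by (simp add: D1_Ld[OF grad_f] D2_Ld[OF grad_f] algebra_simps)
    also have "\<dots> = a (Suc j) *\<^sub>R (x (Suc j) - eta (Suc j) *\<^sub>R P (x (Suc j)) + mu (Suc j) *\<^sub>R (x (Suc j) - x j) - x (Suc (Suc j)))"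
      unfolding am[of j] be by (simp add: algebra_simps)
    finally show ?thesis .
  qed
  have E2: "D1 (Ld a bm bp f (Suc j)) (x (Suc j)) (x (Suc j+1)) + D2 (Ld a bm bp f j) (x j) (x (Suc j))
     + Fdm a bm bp P (Suc j) (x (Suc j)) (x (Suc j+1)) + Fdp a bm bp P j (x j) (x (Suc j))
     = a (Suc j) *\<^sub>R (x (Suc j) - eta (Suc j) *\<^sub>R P (x (Suc j)) + mu (Suc j) *\<^sub>R ((x (Suc j) - eta (Suc j) *\<^sub>R P (x (Suc j))) - (x j - eta j *\<^sub>R P (x j))) - x (Suc (Suc j)))" for x j
  proof -
    have m: "a j / a (Suc j) = mu (Suc j)" using hmu by simp
    have b1: "bm (Suc j) + bp (Suc j) = eta (Suc j) * a (Suc j)" by (rule be)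
    have b0: "bm j + bp j = eta j * (mu (Suc j) * a (Suc j))" using be[of j] am[of j] by simp
    have "Fdm a bm bp P (Suc j) (x (Suc j)) (x (Suc j+1)) = (- mu (Suc j) * (eta (Suc j) * a (Suc j))) *\<^sub>R P (x (Suc j))"
      unfolding Fdm_def diff_Suc_1 m b1 by (rule refl)
    moreover have "Fdp a bm bp P j (x j) (x (Suc j)) = (eta j * (mu (Suc j) * a (Suc j))) *\<^sub>R P (x j)"
      unfolding Fdp_def b0 by (rule refl)
    ultimately show ?thesis unfolding E1 by (simp only: alg2)
  qed
  have R1: "free_DEL (Ld a bm bp f) x \<longleftrightarrow> (\<forall>j. x (Suc (Suc j)) = x (Suc j) - eta (Suc j) *\<^sub>R P (x (Suc j)) + mu (Suc j) *\<^sub>R (x (Suc j) - x j))" for x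
  proof -
    have "free_DEL (Ld a bm bp f) x \<longleftrightarrow> (\<forall>j. D1 (Ld a bm bp f (Suc j)) (x (Suc j)) (x (Suc j+1)) + D2 (Ld a bm bp f j) (x j) (x (Suc j)) = 0)"
      unfolding free_DEL_def all_ge1 diff_Suc_1 by (rule refl)
    also have "\<dots> \<longleftrightarrow> (\<forall>j. x (Suc (Suc j)) = x (Suc j) - eta (Suc j) *\<^sub>R P (x (Suc j)) + mu (Suc j) *\<^sub>R (x (Suc j) - x j))"
      unfolding E1 by (simp only: sc0[OF ha[rule_format]])
    finally show ?thesis .
  qed
  have R2: "forced_DEL (Ld a bm bp f) (Fdm a bm bp P) (Fdp a bm bp P) x \<longleftrightarrow> (\<forall>j. x (Suc (Suc j)) = x (Suc j) - eta (Suc j) *\<^sub>R P (x (Suc j)) + mu (Suc j) *\<^sub>R ((x (Suc j) - eta (Suc j) *\<^sub>R P (x (Suc j))) - (x j - eta j *\<^sub>R P (x j))))" for x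
  proof -
    have "forced_DEL (Ld a bm bp f) (Fdm a bm bp P) (Fdp a bm bp P) x \<longleftrightarrow> (\<forall>j. D1 (Ld a bm bp f (Suc j)) (x (Suc j)) (x (Suc j+1)) + D2 (Ld a bm bp f j) (x j) (x (Suc j))
     + Fdm a bm bp P (Suc j) (x (Suc j)) (x (Suc j+1)) + Fdp a bm bp P j (x j) (x (Suc j)) = 0)"
      unfolding forced_DEL_def all_ge1 diff_Suc_1 by (rule refl)
    also have "\<dots> \<longleftrightarrow> (\<forall>j. x (Suc (Suc j)) = x (Suc j) - eta (Suc j) *\<^sub>R P (x (Suc j)) + mu (Suc j) *\<^sub>R ((x (Suc j) - eta (Suc j) *\<^sub>R P (x (Suc j))) - (x j - eta j *\<^sub>R P (x j))))"
      unfolding E2 by (simp only: sc0[OF ha[rule_format]])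
    finally show ?thesis .
  qed
  define Y where "Y x = (\<lambda>j. x (j-1) - eta (j-1) *\<^sub>R P (x (j-1)))" for x :: "nat \<Rightarrow> 'v"
  have S1: "(\<exists>y. scheme_free mu eta P x y) \<longleftrightarrow> (\<forall>j. x (Suc (Suc j)) = x (Suc j) - eta (Suc j) *\<^sub>R P (x (Suc j)) + mu (Suc j) *\<^sub>R (x (Suc j) - x j))" for x
  proof
    assume "\<exists>y. scheme_free mu eta P x y"
    then obtain y where y: "scheme_free mu eta P x y" by blast
    show "\<forall>j. x (Suc (Suc j)) = x (Suc j) - eta (Suc j) *\<^sub>R P (x (Suc j)) + mu (Suc j) *\<^sub>R (x (Suc j) - x j)"
    proof
      fix j
      from y have "x (Suc j + 1) = y (Suc j + 1) + mu (Suc j) *\<^sub>R (x (Suc j) - x (Suc j - 1))"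
        unfolding scheme_free_def all_ge1 by blast
      moreover from y have "y (Suc j + 1) = x (Suc j) - eta (Suc j) *\<^sub>R P (x (Suc j))"
        unfolding scheme_free_def by blast
      ultimately show "x (Suc (Suc j)) = x (Suc j) - eta (Suc j) *\<^sub>R P (x (Suc j)) + mu (Suc j) *\<^sub>R (x (Suc j) - x j)" by simp
    qed
  next
    assume h: "\<forall>j. x (Suc (Suc j)) = x (Suc j) - eta (Suc j) *\<^sub>R P (x (Suc j)) + mu (Suc j) *\<^sub>R (x (Suc j) - x j)"
    have "scheme_free mu eta P x (Y x)" unfolding scheme_free_def Y_def
    proof (intro conjI allI impI)
      fix k :: nat assume "k \<ge> 1"
      then obtain j where "k = Suc j" by (cases k) auto
      then show "x (k + 1) = x (k + 1 - 1) - eta (k + 1 - 1) *\<^sub>R P (x (k + 1 - 1)) + mu k *\<^sub>R (x k - x (k - 1))"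
        using h by simp
    qed simp
    then show "\<exists>y. scheme_free mu eta P x y" by blast
  qed
  have S2: "(\<exists>y. scheme_forced mu eta P x y) \<longleftrightarrow> (\<forall>j. x (Suc (Suc j)) = x (Suc j) - eta (Suc j) *\<^sub>R P (x (Suc j)) + mu (Suc j) *\<^sub>R ((x (Suc j) - eta (Suc j) *\<^sub>R P (x (Suc j))) - (x j - eta j *\<^sub>R P (x j))))" for x
  proof
    assume "\<exists>y. scheme_forced mu eta P x y"
    then obtain y where y: "scheme_forced mu eta P x y" by blast
    show "\<forall>j. x (Suc (Suc j)) = x (Suc j) - eta (Suc j) *\<^sub>R P (x (Suc j)) + mu (Suc j) *\<^sub>R ((x (Suc j) - eta (Suc j) *\<^sub>R P (x (Suc j))) - (x j - eta j *\<^sub>R P (x j)))"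
    proof
      fix j
      from y have "x (Suc j + 1) = y (Suc j + 1) + mu (Suc j) *\<^sub>R (y (Suc j + 1) - y (Suc j))"
        unfolding scheme_forced_def all_ge1 by blast
      moreover from y have "y (Suc j + 1) = x (Suc j) - eta (Suc j) *\<^sub>R P (x (Suc j))"
        unfolding scheme_forced_def by blast
      moreover from y have "y (j + 1) = x j - eta j *\<^sub>R P (x j)"
        unfolding scheme_forced_def by blast
      ultimately show "x (Suc (Suc j)) = x (Suc j) - eta (Suc j) *\<^sub>R P (x (Suc j)) + mu (Suc j) *\<^sub>R ((x (Suc j) - eta (Suc j) *\<^sub>R P (x (Suc j))) - (x j - eta j *\<^sub>R P (x j)))" by simp
    qed
  next
    assume h: "\<forall>j. x (Suc (Suc j)) = x (Suc j) - eta (Suc j) *\<^sub>R P (x (Suc j)) + mu (Suc j) *\<^sub>R ((x (Suc j) - eta (Suc j) *\<^sub>R P (x (Suc j))) - (x j - eta j *\<^sub>R P (x j)))"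
    have "scheme_forced mu eta P x (Y x)" unfolding scheme_forced_def Y_def
    proof (intro conjI allI impI)
      fix k :: nat assume "k \<ge> 1"
      then obtain j where "k = Suc j" by (cases k) auto
      then show "x (k + 1) = x (k + 1 - 1) - eta (k + 1 - 1) *\<^sub>R P (x (k + 1 - 1)) + mu k *\<^sub>R (x (k + 1 - 1) - eta (k + 1 - 1) *\<^sub>R P (x (k + 1 - 1)) - (x (k - 1) - eta (k - 1) *\<^sub>R P (x (k - 1))))"
        using h by simp
    qed simp
    then show "\<exists>y. scheme_forced mu eta P x y" by blast
  qed
  show ?thesis using R1 R2 S1 S2 by simp
qed

theorem theorem7p2:
  fixes f :: "real ^ 'n \<Rightarrow> real" and P :: "real ^ 'n \<Rightarrow> real ^ 'n"
  assumes grad_f: "\<forall>z. (f has_derivative (\<lambda>h. P z \<bullet> h)) (at z)"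
  shows
    "(\<forall>(a::nat \<Rightarrow> real) bm bp (mu::nat \<Rightarrow> real) (eta::nat \<Rightarrow> real).
        (\<forall>k. a k \<noteq> 0) \<and> (\<forall>k. mu (k+1) = a k / a (k+1)) \<and> (\<forall>k. eta k = (bm k + bp k) / a k)
        \<longrightarrow> (\<forall>x. free_DEL (Ld a bm bp f) x \<longleftrightarrow> (\<exists>y. scheme_free mu eta P x y))
          \<and> (\<forall>x. forced_DEL (Ld a bm bp f) (Fdm a bm bp P) (Fdp a bm bp P) x
                 \<longleftrightarrow> (\<exists>y. scheme_forced mu eta P x y)))
     \<and>
     (\<forall>(mu::nat \<Rightarrow> real) (eta::nat \<Rightarrow> real) (a::nat \<Rightarrow> real) bm bp.
        (\<forall>k. mu (k+1) \<noteq> 0) \<and> a 0 = 1 \<and> (\<forall>k. a (k+1) = a k / mu (k+1))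
        \<and> (\<forall>k. bm k = 1/2 * a k * eta k) \<and> (\<forall>k. bp k = 1/2 * a k * eta k)
        \<longrightarrow> (\<forall>x. free_DEL (Ld a bm bp f) x \<longleftrightarrow> (\<exists>y. scheme_free mu eta P x y))
          \<and> (\<forall>x. forced_DEL (Ld a bm bp f) (Fdm a bm bp P) (Fdp a bm bp P) x
                 \<longleftrightarrow> (\<exists>y. scheme_forced mu eta P x y)))"
proof (rule conjI; intro allI impI)
  fix a bm bp :: "nat \<Rightarrow> real" and mu eta :: "nat \<Rightarrow> real"
  assume "(\<forall>k. a k \<noteq> 0) \<and> (\<forall>k. mu (k+1) = a k / a (k+1)) \<and> (\<forall>k. eta k = (bm k + bp k) / a k)"
  then show "(\<forall>x. free_DEL (Ld a bm bp f) x \<longleftrightarrow> (\<exists>y. scheme_free mu eta P x y))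
          \<and> (\<forall>x. forced_DEL (Ld a bm bp f) (Fdm a bm bp P) (Fdp a bm bp P) x
                 \<longleftrightarrow> (\<exists>y. scheme_forced mu eta P x y))"
    using part1[OF grad_f] by blast
next
  fix a bm bp :: "nat \<Rightarrow> real" and mu eta :: "nat \<Rightarrow> real"
  assume h: "(\<forall>k. mu (k+1) \<noteq> 0) \<and> a 0 = 1 \<and> (\<forall>k. a (k+1) = a k / mu (k+1))
        \<and> (\<forall>k. bm k = 1/2 * a k * eta k) \<and> (\<forall>k. bp k = 1/2 * a k * eta k)"
  have ha: "\<forall>k. a k \<noteq> 0"
  proof
    fix k show "a k \<noteq> 0" using h by (induction k) auto
  qed
  have hmu: "\<forall>k. mu (k+1) = a k / a (k+1)" using h ha by auto
  have heta: "\<forall>k. eta k = (bm k + bp k) / a k"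
  proof
    fix k
    have "bm k = 1/2 * a k * eta k" "bp k = 1/2 * a k * eta k" using h by blast+
    then have "bm k + bp k = eta k * a k" by (simp add: algebra_simps)
    then show "eta k = (bm k + bp k) / a k" using ha by simp
  qed
  show "(\<forall>x. free_DEL (Ld a bm bp f) x \<longleftrightarrow> (\<exists>y. scheme_free mu eta P x y))
          \<and> (\<forall>x. forced_DEL (Ld a bm bp f) (Fdm a bm bp P) (Fdp a bm bp P) x
                 \<longleftrightarrow> (\<exists>y. scheme_forced mu eta P x y))"
    by (rule part1[OF grad_f ha hmu heta])
qed

end
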